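(* Let $\Bbbk=\mathbb Z$ or $\mathbb Q$. Let $x,y,z$ be a basis of $H^2(BT^3;\mathbb Z)$ and let $\tilde\Gamma$ be the $3$-valent unsigned GKM graph with $T^3$-labeling on the complete bipartite graph with vertices $1,\dots,6$ and edges $16,25,34$ labeled $x$, edges $12,36,45$ labeled $y$, and edges $14,23,56$ labeled $z$ (with the connection mapping, along each edge, the edge with a given label to the edge with the same label). Let $\Gamma$ be the unsigned GKM graph of the $T^2$-action on the flag manifold $\mathrm{SU}(3)/T^2$ by left multiplication, and let $p\colon H^2(BT^3;\mathbb Z)\to H^2(BT^2;\mathbb Z)$ be an epimorphism such that $\tilde\Gamma$ extends $\Gamma$ (same graph and connection, $p\circ\alpha_{\tilde\Gamma}=\alpha_\Gamma$ modulo signs). Then $H^*_{T^3}(\tilde\Gamma;\Bbbk)$ is not a free $H^*(BT^3;\Bbbk)$-module, and the induced map $p_*\colon H^*_{T^3}(\tilde\Gamma;\Bbbk)\to H^*_{T^2}(\Gamma;\Bbbk)$, $f\mapsto p\circ f$, is not surjective.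
   Context: For a graph with axial function $\alpha$ (values in $H^2(BT;\mathbb Z)/\{\pm1\}$), the equivariant graph cohomology is $H^*_T(\Gamma;\Bbbk)=\{f\colon V\to H^*(BT;\Bbbk)\mid f(t(e))-f(i(e))\in(\alpha(e))\ \forall e\}$, a module over the polynomial ring $H^*(BT;\Bbbk)$. The GKM graph of $\mathrm{SU}(3)/T^2$ has the six $T^2$-fixed points as vertices, forms a complete bipartite graph $K_{3,3}$, and its labels at every vertex are the three positive roots of $\mathrm{SU}(3)$ modulo sign; such an epimorphism $p$ exists (sending $x,y,z$ to the three positive roots suitably). *)

theory Defs
  imports Main "HOL-Computational_Algebra.Polynomial" "HOL-Library.Product_Plus"
    "HOL-Combinatorics.Transposition" "HOL-Library.Function_Algebras" "HOL-Combinatorics.Permutations"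
begin

type_synonym lat3 = "int \<times> int \<times> int"   \<comment> \<open>H^2(BT^3;Z) in standard coordinates\<close>
type_synonym lat2 = "int \<times> int"           \<comment> \<open>H^2(BT^2;Z), basis a1, a2 (simple roots)\<close>

definition smul3 :: "int \<Rightarrow> lat3 \<Rightarrow> lat3" where
  "smul3 c v = (c * fst v, c * fst (snd v), c * snd (snd v))"

definition is_basis3 :: "lat3 \<Rightarrow> lat3 \<Rightarrow> lat3 \<Rightarrow> bool" where
  "is_basis3 x y z \<longleftrightarrow>
     (\<forall>v. \<exists>!c::int \<times> int \<times> int.
        v = smul3 (fst c) x + smul3 (fst (snd c)) y + smul3 (snd (snd c)) z)"

text \<open>H^*(BT^3;k) = k[X,Y,Z] as 'k poly poly poly (X outermost, Z innermost).\<close>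
definition varX :: "'k::comm_ring_1 poly poly poly" where "varX = [:0, 1:]"
definition varY :: "'k::comm_ring_1 poly poly poly" where "varY = [:[:0, 1:]:]"
definition varZ :: "'k::comm_ring_1 poly poly poly" where "varZ = [:[:[:0, 1:]:]:]"

text \<open>H^*(BT^2;k) = k[U,V] as 'k poly poly; U,V correspond to a1,a2.\<close>
definition varU :: "'k::comm_ring_1 poly poly" where "varU = [:0, 1:]"
definition varV :: "'k::comm_ring_1 poly poly" where "varV = [:[:0, 1:]:]"

definition lin3 :: "lat3 \<Rightarrow> 'k::comm_ring_1 poly poly poly" where
  "lin3 v = of_int (fst v) * varX + of_int (fst (snd v)) * varY + of_int (snd (snd v)) * varZ"

definition lin2 :: "lat2 \<Rightarrow> 'k::comm_ring_1 poly poly" where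
  "lin2 v = of_int (fst v) * varU + of_int (snd v) * varV"

definition eval3 :: "'k::comm_ring_1 poly poly \<Rightarrow> 'k poly poly \<Rightarrow> 'k poly poly
                       \<Rightarrow> 'k poly poly poly \<Rightarrow> 'k poly poly" where
  "eval3 a b c P =
     poly (map_poly (\<lambda>Q. poly (map_poly (\<lambda>R. poly (map_poly (\<lambda>r. [:[:r:]:]) R) c) Q) b) P) a"

text \<open>The ring map H^*(BT^3;k) -> H^*(BT^2;k) induced by p : H^2(BT^3;Z) -> H^2(BT^2;Z).\<close>
definition pring :: "(lat3 \<Rightarrow> lat2) \<Rightarrow> 'k::comm_ring_1 poly poly poly \<Rightarrow> 'k poly poly" where
  "pring p = eval3 (lin2 (p (1,0,0))) (lin2 (p (0,1,0))) (lin2 (p (0,0,1)))"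

text \<open>Edges are triples (i(e), t(e), label); the label is already a polynomial (degree 2).\<close>
definition graph_cohom :: "'v set \<Rightarrow> ('v \<times> 'v \<times> 'r::comm_ring_1) set \<Rightarrow> ('v \<Rightarrow> 'r) set" where
  "graph_cohom V E = {f. (\<forall>v. v \<notin> V \<longrightarrow> f v = 0) \<and> (\<forall>(a, b, l) \<in> E. l dvd (f b - f a))}"

definition free_submodule :: "('v \<Rightarrow> 'r::comm_ring_1) set \<Rightarrow> bool" where
  "free_submodule M \<longleftrightarrow>
     (\<exists>B. B \<subseteq> M \<and> \<not> module.dependent (\<lambda>r f v. r * f v) B
          \<and> module.span (\<lambda>r f v. r * f v) B = M)"

definition Etilde :: "lat3 \<Rightarrow> lat3 \<Rightarrow> lat3 \<Rightarrow> (nat \<times> nat \<times> lat3) set" where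
  "Etilde x y z = {(1,6,x), (2,5,x), (3,4,x), (1,2,y), (3,6,y), (4,5,y), (1,4,z), (2,3,z), (5,6,z)}"

definition Htilde :: "lat3 \<Rightarrow> lat3 \<Rightarrow> lat3 \<Rightarrow> (nat \<Rightarrow> 'k::comm_ring_1 poly poly poly) set" where
  "Htilde x y z = graph_cohom {1..6} ((\<lambda>(a, b, l). (a, b, lin3 l)) ` Etilde x y z)"

text \<open>Vertices: Weyl group S_3 (permutations of {1,2,3}) = the T^2-fixed points.\<close>
definition S3 :: "(nat \<Rightarrow> nat) set" where "S3 = {w. w permutes {1,2,3}}"

text \<open>H^2(BT^2;Z) is taken to be the lattice of the effectively acting torus T^2 = T/Z(SU(3)),
  i.e. the root lattice, with basis a1 = t1 - t2, a2 = t2 - t3 (so t1 - t3 = a1 + a2).\<close>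
definition root :: "nat \<Rightarrow> nat \<Rightarrow> lat2" where
  "root i j = (if (i, j) = (1, 2) then (1, 0) else if (i, j) = (2, 3) then (0, 1) else (1, 1))"

definition EGamma :: "((nat \<Rightarrow> nat) \<times> (nat \<Rightarrow> nat) \<times> lat2) set" where
  "EGamma = {(w, transpose i j \<circ> w, root i j) | w i j.
               w \<in> S3 \<and> i \<in> {1,2,3} \<and> j \<in> {1,2,3} \<and> i < j}"

definition HGamma :: "((nat \<Rightarrow> nat) \<Rightarrow> 'k::comm_ring_1 poly poly) set" where
  "HGamma = graph_cohom S3 ((\<lambda>(a, b, l). (a, b, lin2 l)) ` EGamma)"

definition extends_via :: "lat3 \<Rightarrow> lat3 \<Rightarrow> lat3 \<Rightarrow> (lat3 \<Rightarrow> lat2) \<Rightarrow> (nat \<Rightarrow> nat \<Rightarrow> nat) \<Rightarrow> bool" where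
  "extends_via x y z p \<phi> \<longleftrightarrow>
     bij_betw \<phi> {1..6} S3 \<and>
     (\<forall>a\<in>{1..6}. \<forall>b\<in>{1..6}.
        (\<exists>l. (a, b, l) \<in> Etilde x y z \<or> (b, a, l) \<in> Etilde x y z) \<longleftrightarrow> (\<exists>r. (\<phi> a, \<phi> b, r) \<in> EGamma)) \<and>
     (\<forall>(a, b, l) \<in> Etilde x y z. \<forall>r.
        ((\<phi> a, \<phi> b, r) \<in> EGamma \<or> (\<phi> b, \<phi> a, r) \<in> EGamma) \<longrightarrow> (p l = r \<or> p l = - r))"

text \<open>The induced map p_* : f |-> p o f, transported along phi.\<close>
definition pstar :: "(lat3 \<Rightarrow> lat2) \<Rightarrow> (nat \<Rightarrow> nat \<Rightarrow> nat)
                     \<Rightarrow> (nat \<Rightarrow> 'k::comm_ring_1 poly poly poly) \<Rightarrow> ((nat \<Rightarrow> nat) \<Rightarrow> 'k poly poly)" where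
  "pstar p \<phi> f = (\<lambda>w. if w \<in> S3 then pring p (f (inv_into {1..6} \<phi> w)) else 0)"

end

theory Submission
  imports Defs
begin

definition cc :: "'k::comm_ring_1 poly poly poly \<Rightarrow> 'k" where
  "cc P = coeff (coeff (coeff P 0) 0) 0"
definition lcX :: "'k::comm_ring_1 poly poly poly \<Rightarrow> 'k" where
  "lcX P = coeff (coeff (coeff P 1) 0) 0"
definition lcY :: "'k::comm_ring_1 poly poly poly \<Rightarrow> 'k" where
  "lcY P = coeff (coeff (coeff P 0) 1) 0"
definition lcZ :: "'k::comm_ring_1 poly poly poly \<Rightarrow> 'k" where
  "lcZ P = coeff (coeff (coeff P 0) 0) 1"
definition dot :: "lat3 \<Rightarrow> lat3 \<Rightarrow> int" where
  "dot l v = fst l * fst v + fst (snd l) * fst (snd v) + snd (snd l) * snd (snd v)"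
definition Dv :: "lat3 \<Rightarrow> 'k::comm_ring_1 poly poly poly \<Rightarrow> 'k" where
  "Dv v P = of_int (fst v) * lcX P + of_int (fst (snd v)) * lcY P + of_int (snd (snd v)) * lcZ P"

lemma coeff_mult_1: "coeff (p * q) (Suc 0) = coeff p 0 * coeff q (Suc 0) + coeff p (Suc 0) * coeff q 0"
  by (simp add: coeff_mult atMost_Suc add.commute)

lemma cc_add [simp]: "cc (P + Q) = cc P + cc Q" by (simp add: cc_def)
lemma cc_diff [simp]: "cc (P - Q) = cc P - cc Q" by (simp add: cc_def)
lemma cc_minus [simp]: "cc (- P) = - cc P" by (simp add: cc_def)
lemma cc_mult [simp]: "cc (P * Q) = cc P * cc Q" by (simp add: cc_def coeff_mult_0)
lemma cc_0 [simp]: "cc 0 = 0" by (simp add: cc_def)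

lemma Dv_add [simp]: "Dv v (P + Q) = Dv v P + Dv v Q"
  by (simp add: Dv_def lcX_def lcY_def lcZ_def algebra_simps)
lemma Dv_diff [simp]: "Dv v (P - Q) = Dv v P - Dv v Q"
  by (simp add: Dv_def lcX_def lcY_def lcZ_def algebra_simps)
lemma Dv_minus [simp]: "Dv v (- P) = - Dv v P"
  by (simp add: Dv_def lcX_def lcY_def lcZ_def algebra_simps)
lemma Dv_0 [simp]: "Dv v 0 = 0"
  by (simp add: Dv_def lcX_def lcY_def lcZ_def)
lemma Dv_mult [simp]: "Dv v (P * Q) = cc P * Dv v Q + Dv v P * cc Q"
  by (simp add: Dv_def lcX_def lcY_def lcZ_def cc_def coeff_mult_0 coeff_mult_1 algebra_simps)

lemma cc_sum: "cc (sum f A) = (\<Sum>a\<in>A. cc (f a))"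
  by (induct A rule: infinite_finite_induct) auto
lemma Dv_sum: "Dv v (sum f A) = (\<Sum>a\<in>A. Dv v (f a))"
  by (induct A rule: infinite_finite_induct) auto

lemma cc_lin3 [simp]: "cc (lin3 l) = 0"
  by (simp add: cc_def lin3_def varX_def varY_def varZ_def of_int_poly)
lemma Dv_lin3 [simp]: "Dv v (lin3 l :: 'k::comm_ring_1 poly poly poly) = of_int (dot l v)"
  by (simp add: Dv_def lcX_def lcY_def lcZ_def dot_def lin3_def varX_def varY_def varZ_def of_int_poly
       algebra_simps)

definition comb :: "lat3 \<Rightarrow> lat3 \<Rightarrow> lat3 \<Rightarrow> lat3 \<Rightarrow> lat3" where
  "comb x y z c = smul3 (fst c) x + smul3 (fst (snd c)) y + smul3 (snd (snd c)) z"

lemma comb_lin: "comb x y z (smul3 a c + smul3 b d + smul3 e f) =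
   smul3 a (comb x y z c) + smul3 b (comb x y z d) + smul3 e (comb x y z f)"
  by (simp add: comb_def smul3_def algebra_simps)



lemma dual:
  assumes "is_basis3 x y z"
  shows "\<exists>vx vy vz. dot x vx = 1 \<and> dot y vx = 0 \<and> dot z vx = 0 \<and>
     dot x vy = 0 \<and> dot y vy = 1 \<and> dot z vy = 0 \<and>
     dot x vz = 0 \<and> dot y vz = 0 \<and> dot z vz = 1"
proof -
  define co where "co w = (THE c. w = comb x y z c)" for w
  have ex: "\<exists>!c. w = comb x y z c" for w
    using assms unfolding is_basis3_def comb_def by (rule spec)
  have uq: "w = comb x y z c \<Longrightarrow> co w = c" for w c
    unfolding co_def by (rule the1_equality[OF ex])
  have sp: "comb x y z (co w) = w" for w
    unfolding co_def using theI'[OF ex[of w]] by simp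
  define D where "D w = smul3 (fst w) (co (1,0,0)) + smul3 (fst (snd w)) (co (0,1,0)) + smul3 (snd (snd w)) (co (0,0,1))" for w
  have "comb x y z (D w) = w" for w
    unfolding D_def comb_lin sp by (simp add: smul3_def)
  then have coD: "co w = D w" for w using uq by metis
  have cx: "co x = (1,0,0)" by (rule uq) (simp add: comb_def smul3_def zero_prod_def)
  have cy: "co y = (0,1,0)" by (rule uq) (simp add: comb_def smul3_def zero_prod_def)
  have cz: "co z = (0,0,1)" by (rule uq) (simp add: comb_def smul3_def zero_prod_def)
  define vx where "vx = (fst (co (1,0,0)), fst (co (0,1,0)), fst (co (0,0,1)))"
  define vy where "vy = (fst (snd (co (1,0,0))), fst (snd (co (0,1,0))), fst (snd (co (0,0,1))))"
  define vz where "vz = (snd (snd (co (1,0,0))), snd (snd (co (0,1,0))), snd (snd (co (0,0,1))))"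
  have "\<And>w. dot w vx = fst (D w)" "\<And>w. dot w vy = fst (snd (D w))" "\<And>w. dot w vz = snd (snd (D w))"
    by (simp_all add: D_def vx_def vy_def vz_def dot_def smul3_def)
  then have "\<And>w. dot w vx = fst (co w)" "\<And>w. dot w vy = fst (snd (co w))" "\<And>w. dot w vz = snd (snd (co w))"
    by (simp_all add: coD)
  then have "dot x vx = 1 \<and> dot y vx = 0 \<and> dot z vx = 0 \<and>
     dot x vy = 0 \<and> dot y vy = 1 \<and> dot z vy = 0 \<and>
     dot x vz = 0 \<and> dot y vz = 0 \<and> dot z vz = 1" using cx cy cz by simp
  then show ?thesis by blast
qed


abbreviation sc :: "'r::comm_ring_1 \<Rightarrow> (nat \<Rightarrow> 'r) \<Rightarrow> (nat \<Rightarrow> 'r)" where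
  "sc \<equiv> (\<lambda>r f v. r * f v)"

lemma module_sc: "module (sc :: 'r::comm_ring_1 \<Rightarrow> _)"
  by unfold_locales (auto simp: fun_eq_iff algebra_simps)

lemma sum_fun_app: "(sum F A) (i::nat) = (\<Sum>a\<in>A. F a i)"
  by (induct A rule: infinite_finite_induct) auto

lemma Ht_dvd:
  assumes "f \<in> Htilde x y z" "(a, b, l) \<in> Etilde x y z"
  shows "lin3 l dvd f b - f a"
proof -
  have "(a, b, lin3 l) \<in> (\<lambda>(a, b, l). (a, b, lin3 l)) ` Etilde x y z"
    using assms(2) by force
  then show ?thesis using assms(1) unfolding Htilde_def graph_cohom_def by blast
qed

lemma Ht_intro:
  assumes "\<forall>v. v \<notin> {1..6} \<longrightarrow> f v = 0"
    and "\<forall>(a, b, l) \<in> Etilde x y z. lin3 l dvd f b - f a"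
  shows "f \<in> Htilde x y z"
  using assms unfolding Htilde_def graph_cohom_def by auto

lemma cyc:
  fixes f :: "nat \<Rightarrow> 'k::comm_ring_1 poly poly poly"
  assumes "f \<in> Htilde x y z" "dot x vy = 0" "dot y vy = 1" "dot z vy = 0"
  shows "\<exists>q. f 2 - f 1 = lin3 y * q \<and> cc q = 0"
proof -
  obtain q12 where 1: "f 2 - f 1 = lin3 y * q12"
    using Ht_dvd[OF assms(1), of 1 2 y] by (auto simp: Etilde_def)
  obtain q25 where 2: "f 5 - f 2 = lin3 x * q25"
    using Ht_dvd[OF assms(1), of 2 5 x] by (auto simp: Etilde_def)
  obtain q56 where 3: "f 6 - f 5 = lin3 z * q56"
    using Ht_dvd[OF assms(1), of 5 6 z] by (auto simp: Etilde_def)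
  obtain q16 where 4: "f 6 - f 1 = lin3 x * q16"
    using Ht_dvd[OF assms(1), of 1 6 x] by (auto simp: Etilde_def)
  have "lin3 y * q12 + lin3 x * q25 + lin3 z * q56 - lin3 x * q16 = 0"
    unfolding 1[symmetric] 2[symmetric] 3[symmetric] 4[symmetric] by (simp add: algebra_simps)
  then have "Dv vy (lin3 y * q12 + lin3 x * q25 + lin3 z * q56 - lin3 x * q16) = 0" by simp
  then have "cc q12 = 0" using assms(2-4) by simp
  with 1 show ?thesis by blast
qed


lemma nonfree:
  assumes d: "dot x vx = 1" "dot y vx = 0" "dot z vx = 0"
     "dot x vy = 0" "dot y vy = 1" "dot z vy = 0"
     "dot x vz = 0" "dot y vz = 0" "dot z vz = 1"
  shows "\<not> free_submodule (Htilde x y z :: (nat \<Rightarrow> 'k::idom poly poly poly) set)"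
proof
  assume "free_submodule (Htilde x y z :: (nat \<Rightarrow> 'k::idom poly poly poly) set)"
  then obtain B where B: "B \<subseteq> (Htilde x y z :: (nat \<Rightarrow> 'k::idom poly poly poly) set)"
    "\<not> module.dependent sc B" "module.span sc B = Htilde x y z"
    unfolding free_submodule_def by blast
  define lx where "lx = (lin3 x :: 'k poly poly poly)"
  define ly where "ly = (lin3 y :: 'k poly poly poly)"
  define lz where "lz = (lin3 z :: 'k poly poly poly)"
  define f where "f = (\<lambda>i::nat. if i = 1 \<or> i = 4 then lx * ly else 0)"
  define g where "g = (\<lambda>i::nat. if i = 1 \<or> i = 3 \<or> i = 4 \<or> i = 6 then ly * lz else 0)"
  define h where "h = (\<lambda>i::nat. if i = 3 \<or> i = 6 then - (lx * lz) else 0)"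
  have fM: "f \<in> Htilde x y z"
    by (rule Ht_intro) (auto simp: f_def Etilde_def lx_def ly_def)
  have gM: "g \<in> Htilde x y z"
    by (rule Ht_intro) (auto simp: g_def Etilde_def lz_def ly_def)
  have hM: "h \<in> Htilde x y z"
    by (rule Ht_intro) (auto simp: h_def Etilde_def lx_def lz_def)
  have rel: "lz * f i - lx * g i - ly * h i = 0" for i
    by (auto simp: f_def g_def h_def algebra_simps)
  have ms: "module sc" by (rule module_sc)
  obtain t1 r where t1: "finite t1" "t1 \<subseteq> B" "f = (\<Sum>a\<in>t1. sc (r a) a)"
    using fM B(3) unfolding module.span_explicit[OF ms] by blast
  obtain t2 s where t2: "finite t2" "t2 \<subseteq> B" "g = (\<Sum>a\<in>t2. sc (s a) a)"
    using gM B(3) unfolding module.span_explicit[OF ms] by blast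
  obtain t3 u where t3: "finite t3" "t3 \<subseteq> B" "h = (\<Sum>a\<in>t3. sc (u a) a)"
    using hM B(3) unfolding module.span_explicit[OF ms] by blast
  define T where "T = t1 \<union> t2 \<union> t3"
  define R where "R a = (if a \<in> t1 then r a else 0)" for a
  define S where "S a = (if a \<in> t2 then s a else 0)" for a
  define U where "U a = (if a \<in> t3 then u a else 0)" for a
  have fT: "finite T" "T \<subseteq> B" using t1 t2 t3 by (auto simp: T_def)
  have fR: "f i = (\<Sum>a\<in>T. R a * a i)" for i
    unfolding t1(3) sum_fun_app
    by (rule sum.mono_neutral_cong_left) (use fT in \<open>auto simp: R_def T_def\<close>)
  have gS: "g i = (\<Sum>a\<in>T. S a * a i)" for i
    unfolding t2(3) sum_fun_app
    by (rule sum.mono_neutral_cong_left) (use fT in \<open>auto simp: S_def T_def\<close>)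
  have hU: "h i = (\<Sum>a\<in>T. U a * a i)" for i
    unfolding t3(3) sum_fun_app
    by (rule sum.mono_neutral_cong_left) (use fT in \<open>auto simp: U_def T_def\<close>)
  have "(\<Sum>a\<in>T. sc (lz * R a - lx * S a - ly * U a) a) = 0"
  proof
    fix i
    have "(\<Sum>a\<in>T. sc (lz * R a - lx * S a - ly * U a) a) i
        = lz * (\<Sum>a\<in>T. R a * a i) - lx * (\<Sum>a\<in>T. S a * a i) - ly * (\<Sum>a\<in>T. U a * a i)"
    proof -
      have "(\<Sum>a\<in>T. sc (lz * R a - lx * S a - ly * U a) a) i
          = (\<Sum>a\<in>T. lz * (R a * a i) - lx * (S a * a i) - ly * (U a * a i))"
        unfolding sum_fun_app by (rule sum.cong) (simp_all add: algebra_simps)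
      then show ?thesis by (simp only: sum_subtractf sum_distrib_left)
    qed
    also have "\<dots> = 0" using rel[of i] fR gS hU by simp
    finally show "(\<Sum>a\<in>T. sc (lz * R a - lx * S a - ly * U a) a) i = 0 i" by simp
  qed
  then have coef: "\<forall>a\<in>T. lz * R a - lx * S a - ly * U a = 0"
  proof -
    assume sumeq: "(\<Sum>a\<in>T. sc (lz * R a - lx * S a - ly * U a) a) = 0"
    show ?thesis
    proof (rule ccontr)
      assume "\<not> ?thesis"
      then have "module.dependent sc B"
        unfolding module.dependent_explicit[OF ms]
        apply (intro exI[of _ T] exI[of _ "\<lambda>a. lz * R a - lx * S a - ly * U a"])
        using sumeq fT by auto
      with B(2) show False by blast
    qed
  qed
  have ccR: "cc (R a) = 0" if "a \<in> T" for a
  proof -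
    have "Dv vz (lz * R a - lx * S a - ly * U a) = 0" using coef that by simp
    then show ?thesis using d by (simp add: lx_def ly_def lz_def)
  qed
  have "\<forall>a\<in>T. \<exists>q. a 2 - a 1 = ly * q \<and> cc q = 0"
  proof
    fix a assume "a \<in> T"
    then have "a \<in> Htilde x y z" using B(1) fT by blast
    from cyc[OF this d(4-6)] show "\<exists>q. a 2 - a 1 = ly * q \<and> cc q = 0" unfolding ly_def .
  qed
  then obtain Q where Q: "\<forall>a\<in>T. a 2 - a 1 = ly * Q a \<and> cc (Q a) = 0"
    by (auto dest!: bchoice)
  have "f 2 - f 1 = (\<Sum>a\<in>T. R a * (a 2 - a 1))"
    unfolding fR by (simp add: sum_subtractf algebra_simps)
  also have "\<dots> = ly * (\<Sum>a\<in>T. R a * Q a)"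
  proof -
    have "(\<Sum>a\<in>T. R a * (a 2 - a 1)) = (\<Sum>a\<in>T. ly * (R a * Q a))"
      by (rule sum.cong) (use Q in auto)
    then show ?thesis by (simp add: sum_distrib_left)
  qed
  finally have "ly * (\<Sum>a\<in>T. R a * Q a) = - (lx * ly)" by (simp add: f_def)
  then have "ly * ((\<Sum>a\<in>T. R a * Q a) + lx) = 0" by (simp add: algebra_simps)
  moreover have "ly \<noteq> 0"
  proof
    assume "ly = 0"
    then have "Dv vy ly = 0" by simp
    then show False using d by (simp add: ly_def)
  qed
  ultimately have "(\<Sum>a\<in>T. R a * Q a) = - lx" by (simp add: eq_neg_iff_add_eq_0)
  then have "Dv vx (\<Sum>a\<in>T. R a * Q a) = Dv vx (- lx)" by simp
  moreover have "Dv vx (\<Sum>a\<in>T. R a * Q a) = 0"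
    unfolding Dv_sum by (rule sum.neutral) (use ccR Q in simp)
  ultimately show False using d by (simp add: lx_def)
qed


definition hom :: "('a::comm_ring_1 \<Rightarrow> 'b::comm_ring_1) \<Rightarrow> bool" where
  "hom F \<longleftrightarrow> (\<forall>a b. F (a + b) = F a + F b) \<and> (\<forall>a b. F (a * b) = F a * F b) \<and> F 0 = 0"

lemma hom_sum: "hom F \<Longrightarrow> F (sum g A) = (\<Sum>a\<in>A. F (g a))"
  by (induct A rule: infinite_finite_induct) (auto simp: hom_def)

lemma hom_diff: "hom F \<Longrightarrow> F (a - b) = F a - F b"
proof -
  assume h: "hom F"
  have "F a = F (a - b + b)" by simp
  also have "\<dots> = F (a - b) + F b" using h by (simp only: hom_def)
  finally show ?thesis by (simp add: algebra_simps)
qed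

lemma map_poly_hom_add: "hom F \<Longrightarrow> map_poly F (p + q) = map_poly F p + map_poly F q"
  by (intro poly_eqI) (simp add: coeff_map_poly hom_def)

lemma map_poly_hom_mult: "hom F \<Longrightarrow> map_poly F (p * q) = map_poly F p * map_poly F q"
  by (intro poly_eqI) (simp add: coeff_map_poly coeff_mult hom_sum hom_def[of F])

lemma hom_poly: "hom F \<Longrightarrow> hom (\<lambda>p. poly (map_poly F p) c)"
  unfolding hom_def[of "\<lambda>p. poly (map_poly F p) c"]
  by (simp add: map_poly_hom_add map_poly_hom_mult)

lemma hom_const: "hom (\<lambda>r::'k::comm_ring_1. [:[:r:]:])"
  by (simp add: hom_def)

lemma pring_eq: "pring p = (\<lambda>P. poly (map_poly (\<lambda>Q. poly (map_poly (\<lambda>R. poly (map_poly (\<lambda>r. [:[:r:]:]) R)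
     (lin2 (p (0,0,1)))) Q) (lin2 (p (0,1,0)))) P) (lin2 (p (1,0,0))))"
  by (rule ext) (simp add: pring_def eval3_def)

lemma hom_pring: "hom (pring p :: 'k::comm_ring_1 poly poly poly \<Rightarrow> _)"
  unfolding pring_eq by (intro hom_poly hom_const)

definition cc2 :: "'k::comm_ring_1 poly poly \<Rightarrow> 'k" where "cc2 h = coeff (coeff h 0) 0"
definition lU :: "'k::comm_ring_1 poly poly \<Rightarrow> 'k" where "lU h = coeff (coeff h 1) 0"
definition lV :: "'k::comm_ring_1 poly poly \<Rightarrow> 'k" where "lV h = coeff (coeff h 0) 1"

lemma cc2_poly: "cc2 a = 0 \<Longrightarrow> cc2 (poly p a) = cc2 (coeff p 0)"
  by (cases p rule: pCons_cases) (simp add: cc2_def coeff_mult_0)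

lemma cc2_lin2 [simp]: "cc2 (lin2 v) = 0"
  by (simp add: cc2_def lin2_def varU_def varV_def of_int_poly)

lemma cc_pring: "cc2 (pring p P) = cc P"
  unfolding pring_eq by (simp add: cc2_poly coeff_map_poly) (simp add: cc_def cc2_def)

lemma lU_diff [simp]: "lU (a - b) = lU a - lU b" by (simp add: lU_def)
lemma lV_diff [simp]: "lV (a - b) = lV a - lV b" by (simp add: lV_def)
lemma lU_mult: "lU (a * b) = cc2 a * lU b + lU a * cc2 b"
  by (simp add: lU_def cc2_def coeff_mult_1 coeff_mult_0)
lemma lV_mult: "lV (a * b) = cc2 a * lV b + lV a * cc2 b"
  by (simp add: lV_def cc2_def coeff_mult_1 coeff_mult_0 algebra_simps)
lemma lU_lin2 [simp]: "lU (lin2 v) = of_int (fst v)"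
  by (simp add: lU_def lin2_def varU_def varV_def of_int_poly)
lemma lV_lin2 [simp]: "lV (lin2 v) = of_int (snd v)"
  by (simp add: lV_def lin2_def varU_def varV_def of_int_poly)
lemma lin2_diff: "lin2 u - lin2 v = lin2 (u - v)"
  by (simp add: lin2_def algebra_simps)
lemma lin2_smul: "lin2 (m * fst r, m * snd r) = of_int m * lin2 r"
  by (simp add: lin2_def algebra_simps)


definition ee :: "nat \<Rightarrow> lat2" where
  "ee n = (if n = 1 then (1,1) else if n = 2 then (0,1) else (0,0))"

definition g0 :: "(nat \<Rightarrow> nat) \<Rightarrow> 'k::comm_ring_1 poly poly" where
  "g0 w = (if w \<in> S3 then lin2 (ee (w 1) - ee (w 3)) else 0)"

lemma ee_simps: "ee 1 = (1,1)" "ee 2 = (0,1)" "ee 3 = (0,0)" by (simp_all add: ee_def)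
lemma tr_simps: "transpose (1::nat) 2 1 = 2" "transpose (1::nat) 2 2 = 1" "transpose (1::nat) 2 3 = 3"
 "transpose (1::nat) 3 1 = 3" "transpose (1::nat) 3 2 = 2" "transpose (1::nat) 3 3 = 1"
 "transpose (2::nat) 3 1 = 1" "transpose (2::nat) 3 2 = 3" "transpose (2::nat) 3 3 = 2"
  by (simp_all add: transpose_def)
lemma rt_simps: "root 1 2 = (1,0)" "root 1 3 = (1,1)" "root 2 3 = (0,1)" by (simp_all add: root_def)

lemma fc_mul:
  assumes "(i,j) \<in> {(1::nat,2::nat),(1,3),(2,3)}" "(a,c) \<in> {(1::nat,2::nat),(1,3),(2,1),(2,3),(3,1),(3,2)}"
  defines "D \<equiv> ee (transpose i j a) - ee (transpose i j c) - (ee a - ee c)"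
  shows "D \<noteq> 0 \<and> D = ((if (i,j) = (2,3) then snd D else fst D) * fst (root i j),
              (if (i,j) = (2,3) then snd D else fst D) * snd (root i j))"
  using assms(1,2) unfolding D_def
  apply (elim insertE emptyE)
  apply (simp_all only: prod.inject)
  apply (simp_all add: ee_def transpose_def root_def zero_prod_def)
  done

lemma fin_check:
  assumes "a \<in> {1,2,3}" "c \<in> {1,2,3}" "a \<noteq> c" "i \<in> {1,2,3}" "j \<in> {1,2,3}" "i < j"
  defines "D \<equiv> ee (transpose i j a) - ee (transpose i j c) - (ee a - ee c)"
  shows "D \<noteq> 0 \<and> D = ((if (i,j) = (2,3) then snd D else fst D) * fst (root i j),
                         (if (i,j) = (2,3) then snd D else fst D) * snd (root i j))"
proof -
  have 1: "(i,j) \<in> {(1::nat,2::nat),(1,3),(2,3)}" using assms(4-6) by auto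
  have 2: "(a,c) \<in> {(1::nat,2::nat),(1,3),(2,1),(2,3),(3,1),(3,2)}" using assms(1-3) by auto
  show ?thesis using fc_mul[OF 1 2] unfolding D_def .
qed

lemma S3_facts:
  assumes "w \<in> S3"
  shows "w 1 \<in> {1,2,3}" "w 3 \<in> {1,2,3}" "w 1 \<noteq> w 3"
proof -
  have pw: "w permutes {1,2,3}" using assms by (simp add: S3_def)
  show "w 1 \<in> {1,2,3}" "w 3 \<in> {1,2,3}" using permutes_in_image[OF pw] by auto
  show "w 1 \<noteq> w 3" using inj_eq[OF permutes_inj[OF pw], of 1 3] by simp
qed

lemma S3_comp:
  assumes "w \<in> S3" "i \<in> {1,2,3}" "j \<in> {1,2,3}"
  shows "transpose i j \<circ> w \<in> S3"
proof -
  have pw: "w permutes {1,2,3}" using assms(1) by (simp add: S3_def)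
  have "transpose i j permutes {1,2,3}" by (rule permutes_swap_id) (use assms(2,3) in auto)
  from permutes_compose[OF pw this] show ?thesis by (simp add: S3_def)
qed

lemma g0_in: "(g0 :: (nat \<Rightarrow> nat) \<Rightarrow> 'k::comm_ring_1 poly poly) \<in> HGamma"
  unfolding HGamma_def graph_cohom_def
proof (intro CollectI conjI allI impI ballI)
  fix v :: "nat \<Rightarrow> nat" assume "v \<notin> S3" then show "g0 v = 0" by (simp add: g0_def)
next
  fix e assume "e \<in> (\<lambda>(a, b, l). (a, b, lin2 l :: 'k poly poly)) ` EGamma"
  then obtain t where t: "t \<in> EGamma" "e = (\<lambda>(a, b, l). (a, b, lin2 l :: 'k poly poly)) t" by blast
  from t(1) obtain w i j where tt: "t = (w, transpose i j \<circ> w, root i j)" and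
    w: "w \<in> S3" "i \<in> {1,2,3}" "j \<in> {1,2,3}" "i < j"
    unfolding EGamma_def by blast
  have e: "e = (w, transpose i j \<circ> w, lin2 (root i j))" using t(2) tt by simp
  define D where "D = ee (transpose i j (w 1)) - ee (transpose i j (w 3)) - (ee (w 1) - ee (w 3))"
  define m where "m = (if (i,j) = (2,3) then snd D else fst D)"
  have Dm: "D = (m * fst (root i j), m * snd (root i j))"
    using fin_check[OF S3_facts[OF w(1)] w(2-4)] unfolding D_def m_def by simp
  have "g0 (transpose i j \<circ> w) - g0 w = (lin2 D :: 'k poly poly)"
    using S3_comp[OF w(1-3)] w(1) by (simp add: g0_def lin2_diff D_def)
  also have "\<dots> = of_int m * lin2 (root i j)" unfolding Dm lin2_smul ..
  finally show "case e of (a, b, l) \<Rightarrow> l dvd g0 b - g0 a" unfolding e by simp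
qed


lemma nonsurj:
  assumes d: "dot x vy = 0" "dot y vy = 1" "dot z vy = 0"
    and ev: "extends_via x y z p \<phi>"
  shows "\<not> (HGamma \<subseteq> pstar p \<phi> ` (Htilde x y z :: (nat \<Rightarrow> 'k::{idom,ring_char_0} poly poly poly) set))"
proof
  assume sub: "HGamma \<subseteq> pstar p \<phi> ` (Htilde x y z :: (nat \<Rightarrow> 'k::{idom,ring_char_0} poly poly poly) set)"
  have "(g0 :: _ \<Rightarrow> 'k poly poly) \<in> pstar p \<phi> ` (Htilde x y z :: (nat \<Rightarrow> 'k poly poly poly) set)"
    using g0_in sub by blast
  then obtain f :: "nat \<Rightarrow> 'k poly poly poly" where f: "f \<in> Htilde x y z" "g0 = pstar p \<phi> f" by blast
  obtain q where q: "f 2 - f 1 = lin3 y * q" "cc q = 0" using cyc[OF f(1) d] by blast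
  have ev': "bij_betw \<phi> {1..6} S3 \<and>
     (\<forall>a\<in>{1..6}. \<forall>b\<in>{1..6}.
        (\<exists>l. (a, b, l) \<in> Etilde x y z \<or> (b, a, l) \<in> Etilde x y z) \<longleftrightarrow> (\<exists>r. (\<phi> a, \<phi> b, r) \<in> EGamma))"
    using ev unfolding extends_via_def by blast
  have bij: "bij_betw \<phi> {1..6} S3" using ev' by blast
  have "(1::nat, 2::nat, y) \<in> Etilde x y z" by (simp add: Etilde_def)
  then have "\<exists>r. (\<phi> 1, \<phi> 2, r) \<in> EGamma" using ev' by fastforce
  then obtain w i j where w: "\<phi> 1 = w" "\<phi> 2 = transpose i j \<circ> w" "w \<in> S3"
     "i \<in> {1,2,3}" "j \<in> {1,2,3}" "i < j"
    unfolding EGamma_def by blast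
  have inv: "inv_into {1..6} \<phi> (\<phi> a) = a" if "a \<in> {1..6}" for a
    using inv_into_f_f[OF bij_betw_imp_inj_on[OF bij] that] .
  have inS: "\<phi> a \<in> S3" if "a \<in> {1..6}" for a using bij_betw_apply[OF bij that] .
  have pv: "g0 (\<phi> a) = pring p (f a)" if "a \<in> {1..6}" for a
    unfolding f(2) pstar_def using inv[OF that] inS[OF that] by simp
  have hp: "hom (pring p :: 'k poly poly poly \<Rightarrow> _)" by (rule hom_pring)
  have "g0 (\<phi> 2) - g0 (\<phi> 1) = pring p (f 2) - pring p (f 1)"
    using pv[of 1] pv[of 2] by simp
  also have "\<dots> = pring p (lin3 y) * pring p q"
    unfolding hom_diff[OF hp, symmetric] q(1) using hp by (simp add: hom_def)
  finally have eq: "g0 (\<phi> 2) - g0 (\<phi> 1) = pring p (lin3 y) * (pring p q :: 'k poly poly)" .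
  define D where "D = ee (transpose i j (w 1)) - ee (transpose i j (w 3)) - (ee (w 1) - ee (w 3))"
  have fc: "D \<noteq> 0" using fin_check[OF S3_facts[OF w(3)] w(4-6)] unfolding D_def by blast
  have "g0 (\<phi> 2) - g0 (\<phi> 1) = (lin2 D :: 'k poly poly)"
    using S3_comp[OF w(3-5)] w(1-3) by (simp add: g0_def lin2_diff D_def)
  with eq have eq2: "lin2 D = pring p (lin3 y) * (pring p q :: 'k poly poly)" by simp
  have c1: "cc2 (pring p (lin3 y) :: 'k poly poly) = 0" by (simp add: cc_pring)
  have c2: "cc2 (pring p q :: 'k poly poly) = 0" by (simp add: cc_pring q(2))
  have "lU (lin2 D :: 'k poly poly) = 0" unfolding eq2 lU_mult c1 c2 by simp
  then have "fst D = 0" by simp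
  moreover have "lV (lin2 D :: 'k poly poly) = 0" unfolding eq2 lV_mult c1 c2 by simp
  then have "snd D = 0" by simp
  ultimately have "D = 0" by (simp add: prod_eq_iff)
  with fc show False by simp
qed

theorem proposition5p1:
  fixes x y z :: lat3 and p :: "lat3 \<Rightarrow> lat2" and \<phi> :: "nat \<Rightarrow> nat \<Rightarrow> nat"
  assumes "is_basis3 x y z"
    and "\<forall>a b. p (a + b) = p a + p b"
    and "surj p"
    and "extends_via x y z p \<phi>"
  shows "\<not> free_submodule (Htilde x y z :: (nat \<Rightarrow> int poly poly poly) set)
       \<and> \<not> (HGamma \<subseteq> pstar p \<phi> ` (Htilde x y z :: (nat \<Rightarrow> int poly poly poly) set))
       \<and> \<not> free_submodule (Htilde x y z :: (nat \<Rightarrow> rat poly poly poly) set)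
       \<and> \<not> (HGamma \<subseteq> pstar p \<phi> ` (Htilde x y z :: (nat \<Rightarrow> rat poly poly poly) set))"
proof -
  obtain vx vy vz where d: "dot x vx = 1" "dot y vx = 0" "dot z vx = 0"
     "dot x vy = 0" "dot y vy = 1" "dot z vy = 0"
     "dot x vz = 0" "dot y vz = 0" "dot z vz = 1"
    using dual[OF assms(1)] by blast
  show ?thesis
    using nonfree[OF d, where 'k = int] nonfree[OF d, where 'k = rat]
      nonsurj[OF d(4-6) assms(4), where 'k = int] nonsurj[OF d(4-6) assms(4), where 'k = rat]
    by blast
qed

end
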